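(* Let $I\subset\mathbb{R}$ be an uncountable set. Then the set $\mathrm{NBF}(I)$ of unbounded real-valued functions on $I$ is $2^{\mathrm{card}(I)}$-lineable; that is, there is a vector subspace $V$ of $\mathbb{R}^I$ of dimension $2^{\mathrm{card}(I)}$ such that every nonzero $f\in V$ is unbounded on $I$.
   Context: For a cardinal $\mu$, a set $M$ of functions is called $\mu$-lineable if $M\cup\{0\}$ contains a vector space of dimension $\mu$. *)

theory Defs
  imports "HOL-Analysis.Analysis" "HOL-Library.Equipollence" "HOL-Library.Function_Algebras"
begin

definition fscale :: "real \<Rightarrow> ('a \<Rightarrow> real) \<Rightarrow> ('a \<Rightarrow> real)" where
  "fscale c f = (\<lambda>x. c * f x)"

text \<open>The space R^I, represented by functions real => real vanishing outside I.\<close>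
definition RI :: "real set \<Rightarrow> (real \<Rightarrow> real) set" where
  "RI I = {f. \<forall>x. x \<notin> I \<longrightarrow> f x = 0}"

end

theory Submission
  imports Defs
begin

lemma fscale_module: "module (fscale :: real \<Rightarrow> ('a \<Rightarrow> real) \<Rightarrow> _)"
  by unfold_locales (auto simp: fscale_def fun_eq_iff algebra_simps)

lemma my_sum_apply: "finite S \<Longrightarrow> (\<Sum>b\<in>S. g b) (x::'a) = (\<Sum>b\<in>S. (g b x :: real))"
  by (induction S rule: finite_induct) auto

lemma RI_subspace: "module.subspace fscale (RI I)"
proof -
  interpret module fscale by (rule fscale_module)
  show ?thesis by (rule subspaceI) (auto simp: RI_def fscale_def)
qed

lemma II_lepoll:
  assumes "infinite (I::'a set)"
  shows "I \<times> I \<lesssim> I"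
proof -
  have "I \<times> I \<approx> I"
    unfolding eqpoll_iff_card_of_ordIso using assms by (rule card_of_Times_same_infinite)
  then show ?thesis by (rule eqpoll_imp_lepoll)
qed

lemma Ln_lepoll:
  assumes "infinite (I::'a set)"
  shows "{xs. set xs \<subseteq> I \<and> length xs = n} \<lesssim> I"
proof (induction n)
  case 0
  have "{xs. set xs \<subseteq> I \<and> length xs = 0} = {[]}" by auto
  then show ?case using finite_lepoll_infinite[OF assms, of "{[]}"] by simp
next
  case (Suc n)
  have "{xs. set xs \<subseteq> I \<and> length xs = Suc n} \<lesssim> I \<times> {xs. set xs \<subseteq> I \<and> length xs = n}"
    unfolding lepoll_def
  proof (intro exI[of _ "\<lambda>xs. (hd xs, tl xs)"] conjI)
    show "inj_on (\<lambda>xs. (hd xs, tl xs)) {xs. set xs \<subseteq> I \<and> length xs = Suc n}"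
    proof (rule inj_onI)
      fix xs ys assume "xs \<in> {xs. set xs \<subseteq> I \<and> length xs = Suc n}"
        "ys \<in> {xs. set xs \<subseteq> I \<and> length xs = Suc n}" "(hd xs, tl xs) = (hd ys, tl ys)"
      then show "xs = ys" by (cases xs; cases ys) auto
    qed
    show "(\<lambda>xs. (hd xs, tl xs)) ` {xs. set xs \<subseteq> I \<and> length xs = Suc n}
        \<subseteq> I \<times> {xs. set xs \<subseteq> I \<and> length xs = n}"
    proof (rule image_subsetI)
      fix xs assume "xs \<in> {xs. set xs \<subseteq> I \<and> length xs = Suc n}"
      then show "(hd xs, tl xs) \<in> I \<times> {xs. set xs \<subseteq> I \<and> length xs = n}"
        by (cases xs) auto
    qed
  qed
  also have "\<dots> \<lesssim> I \<times> I" using Suc.IH by (simp add: times_lepoll_mono)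
  also have "\<dots> \<lesssim> I" by (rule II_lepoll[OF assms])
  finally show ?case .
qed

lemma lists_lepoll:
  assumes "infinite (I::'a set)"
  shows "{xs. set xs \<subseteq> I} \<lesssim> I"
proof -
  have "\<forall>n. \<exists>h. inj_on h {xs. set xs \<subseteq> I \<and> length xs = n} \<and> h ` {xs. set xs \<subseteq> I \<and> length xs = n} \<subseteq> I"
    using Ln_lepoll[OF assms] unfolding lepoll_def by blast
  then obtain g where g0: "\<forall>n. inj_on (g n) {xs. set xs \<subseteq> I \<and> length xs = n} \<and> g n ` {xs. set xs \<subseteq> I \<and> length xs = n} \<subseteq> I"
    by (rule choice[THEN exE])
  have g: "\<And>n. inj_on (g n) {xs. set xs \<subseteq> I \<and> length xs = n}"
    "\<And>n. g n ` {xs. set xs \<subseteq> I \<and> length xs = n} \<subseteq> I" using g0 by blast+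
  have "{xs. set xs \<subseteq> I} \<lesssim> (UNIV::nat set) \<times> I"
    unfolding lepoll_def
  proof (intro exI[of _ "\<lambda>xs. (length xs, g (length xs) xs)"] conjI)
    show "inj_on (\<lambda>xs. (length xs, g (length xs) xs)) {xs. set xs \<subseteq> I}"
    proof (rule inj_onI)
      fix xs ys assume "xs \<in> {xs. set xs \<subseteq> I}" "ys \<in> {xs. set xs \<subseteq> I}"
        "(length xs, g (length xs) xs) = (length ys, g (length ys) ys)"
      then have "length xs = length ys" "g (length xs) xs = g (length xs) ys" by auto
      then show "xs = ys" using g(1)[of "length xs"] \<open>xs \<in> _\<close> \<open>ys \<in> _\<close>
        by (simp add: inj_on_def)
    qed
    show "(\<lambda>xs. (length xs, g (length xs) xs)) ` {xs. set xs \<subseteq> I} \<subseteq> UNIV \<times> I"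
      using g(2) by auto
  qed
  also have "\<dots> \<lesssim> I \<times> I"
    by (intro times_lepoll_mono lepoll_refl) (simp add: assms flip: infinite_le_lepoll)
  also have "\<dots> \<lesssim> I" by (rule II_lepoll[OF assms])
  finally show ?thesis .
qed

lemma Fpow_lepoll:
  assumes "infinite (I::real set)"
  shows "Fpow I \<lesssim> I"
proof -
  have "Fpow I \<lesssim> {xs. set xs \<subseteq> I}"
    unfolding lepoll_def
  proof (intro exI[of _ sorted_list_of_set] conjI)
    show "inj_on sorted_list_of_set (Fpow I)"
      by (rule inj_onI) (metis Fpow_def mem_Collect_eq set_sorted_list_of_set)
    show "sorted_list_of_set ` Fpow I \<subseteq> {xs. set xs \<subseteq> I}"
      by (auto simp: Fpow_def)
  qed
  also have "\<dots> \<lesssim> I" by (rule lists_lepoll[OF assms])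
  finally show ?thesis .
qed

lemma D_lepoll:
  assumes "infinite (I::real set)"
  shows "(UNIV::nat set) \<times> (Fpow I \<times> Fpow I) \<lesssim> I"
proof -
  have "Fpow I \<times> Fpow I \<lesssim> I \<times> I"
    by (intro times_lepoll_mono Fpow_lepoll assms)
  also have "I \<times> I \<lesssim> I" by (rule II_lepoll[OF assms])
  finally have 1: "Fpow I \<times> Fpow I \<lesssim> I" .
  have "(UNIV::nat set) \<times> (Fpow I \<times> Fpow I) \<lesssim> I \<times> I"
    by (intro times_lepoll_mono 1) (simp add: assms flip: infinite_le_lepoll)
  also have "I \<times> I \<lesssim> I" by (rule II_lepoll[OF assms])
  finally show ?thesis .
qed

lemma separate:
  assumes "finite S" "A1 \<in> S" "S \<subseteq> Pow I"
  shows "\<exists>F. finite F \<and> F \<subseteq> I \<and> (\<forall>A\<in>S. A \<inter> F = A1 \<inter> F \<longrightarrow> A = A1)"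
proof -
  have "\<forall>A\<in>S - {A1}. \<exists>p. p \<in> I \<and> ((p \<in> A) \<noteq> (p \<in> A1))"
    using assms by blast
  then obtain p where p: "\<And>A. A \<in> S - {A1} \<Longrightarrow> p A \<in> I \<and> ((p A \<in> A) \<noteq> (p A \<in> A1))"
    by metis
  show ?thesis
  proof (intro exI[of _ "p ` (S - {A1})"] conjI ballI impI)
    show "finite (p ` (S - {A1}))" using assms by auto
    show "p ` (S - {A1}) \<subseteq> I" using p by auto
  next
    fix A assume A: "A \<in> S" "A \<inter> p ` (S - {A1}) = A1 \<inter> p ` (S - {A1})"
    show "A = A1"
    proof (rule ccontr)
      assume "A \<noteq> A1"
      then have "A \<in> S - {A1}" using A by auto
      with p[OF this] A(2) show False by blast
    qed
  qed
qed

theorem lemma3p2: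
  fixes I :: "real set"
  assumes "uncountable I"
  shows "\<exists>V B. V \<subseteq> RI I \<and> module.subspace fscale V
            \<and> B \<subseteq> V \<and> \<not> module.dependent fscale B \<and> module.span fscale B = V
            \<and> B \<approx> Pow I
            \<and> (\<forall>f\<in>V. f \<noteq> 0 \<longrightarrow> \<not> bounded (f ` I))"
proof -
  interpret M: module "fscale :: real \<Rightarrow> (real \<Rightarrow> real) \<Rightarrow> (real \<Rightarrow> real)"
    by (rule fscale_module)
  have inf: "infinite I" using assms countable_finite by blast
  define D where "D = (UNIV::nat set) \<times> (Fpow I \<times> Fpow I)"
  obtain e where e: "inj_on e D" "e ` D \<subseteq> I"
    using D_lepoll[OF inf] unfolding D_def[symmetric] lepoll_def by blast
  define fA where "fA A x = (if x \<in> e ` D then (case inv_into D e x of (n, F, G) \<Rightarrow>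
      if A \<inter> F = G then real n else 0) else 0)" for A x
  have fAe: "fA A (e (n, F, G)) = (if A \<inter> F = G then real n else 0)"
    if "finite F" "F \<subseteq> I" "G \<subseteq> F" for A n F G
  proof -
    have "(n, F, G) \<in> D" using that by (auto simp: D_def Fpow_def intro: finite_subset)
    then show ?thesis using e(1) by (simp add: fA_def)
  qed
  have fA_RI: "fA A \<in> RI I" for A
    using e(2) by (auto simp: RI_def fA_def)
  have fA_inj: "inj_on fA (Pow I)"
  proof (rule inj_onI)
    fix A A' assume A: "A \<in> Pow I" "A' \<in> Pow I" "fA A = fA A'"
    show "A = A'"
    proof (rule ccontr)
      assume "A \<noteq> A'"
      then obtain p where p: "p \<in> I" "(p \<in> A) \<noteq> (p \<in> A')" using A by blast
      have "fA A (e (1, {p}, A \<inter> {p})) = fA A' (e (1, {p}, A \<inter> {p}))" using A by simp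
      then show False using p by (simp add: fAe) (auto split: if_splits)
    qed
  qed
  define B where "B = fA ` Pow I"
  have key: "\<exists>x\<in>I. (\<Sum>b\<in>S. fscale (u b) b) x = real n * u b1"
    if S: "finite S" "S \<subseteq> B" "b1 \<in> S" for S u b1 n
  proof -
    define S' where "S' = {A \<in> Pow I. fA A \<in> S}"
    have SS': "S = fA ` S'"
    proof
      show "S \<subseteq> fA ` S'" using S(2) unfolding S'_def B_def by blast
      show "fA ` S' \<subseteq> S" unfolding S'_def by blast
    qed
    have injS': "inj_on fA S'" using fA_inj by (rule inj_on_subset) (unfold S'_def, blast)
    have fS': "finite S'" using S(1) SS' injS' finite_imageD by blast
    obtain A1 where A1: "A1 \<in> S'" "b1 = fA A1" using S(3) SS' by blast
    obtain F where F: "finite F" "F \<subseteq> I" "\<forall>A\<in>S'. A \<inter> F = A1 \<inter> F \<longrightarrow> A = A1"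
      using separate[OF fS' A1(1), of I] unfolding S'_def by blast
    define x where "x = e (n, F, A1 \<inter> F)"
    have "(n, F, A1 \<inter> F) \<in> D" unfolding D_def Fpow_def using F(1,2) by blast
    then have "x \<in> I" unfolding x_def using e(2) by blast
    moreover have "(\<Sum>b\<in>S. fscale (u b) b) x = real n * u b1"
    proof -
      have "(\<Sum>b\<in>S. fscale (u b) b) x = (\<Sum>b\<in>S. u b * b x)"
        using S(1) by (simp add: my_sum_apply fscale_def)
      also have "\<dots> = (\<Sum>A\<in>S'. u (fA A) * fA A x)"
        by (simp only: SS' sum.reindex[OF injS'] o_def)
      also have "\<dots> = (\<Sum>A\<in>S'. if A = A1 then u (fA A1) * real n else 0)"
      proof (rule sum.cong)
        fix A assume A: "A \<in> S'"
        have "fA A x = (if A \<inter> F = A1 \<inter> F then real n else 0)"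
          unfolding x_def using F(1,2) by (rule fAe) simp
        also have "\<dots> = (if A = A1 then real n else 0)" using F(3) A by auto
        finally show "u (fA A) * fA A x = (if A = A1 then u (fA A1) * real n else 0)" by simp
      qed simp
      also have "\<dots> = real n * u b1" using fS' A1 by simp
      finally show ?thesis .
    qed
    ultimately show ?thesis by blast
  qed
  have BRI: "B \<subseteq> RI I" using fA_RI by (auto simp: B_def)
  have c1: "M.span B \<subseteq> RI I" using BRI RI_subspace by (rule M.span_minimal)
  have c2: "M.subspace (M.span B)" by simp
  have c3: "B \<subseteq> M.span B" by (rule M.span_superset)
  have c4: "B \<approx> Pow I" unfolding B_def eqpoll_def using fA_inj
    by (metis bij_betw_imageI bij_betw_the_inv_into)
  have c5: "\<not> M.dependent B"
  proof
    assume "M.dependent B"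
    then obtain t u v where t: "finite t" "t \<subseteq> B" "(\<Sum>v\<in>t. fscale (u v) v) = 0"
      "v \<in> t" "u v \<noteq> 0" unfolding M.dependent_explicit by blast
    from key[OF t(1,2,4), of u 1] t(3,5) show False by auto
  qed
  have c6: "\<not> bounded (f ` I)" if f: "f \<in> M.span B" "f \<noteq> 0" for f
  proof -
    obtain t u where t: "finite t" "t \<subseteq> B" "f = (\<Sum>v\<in>t. fscale (u v) v)"
      using f(1) unfolding M.span_explicit by blast
    have "\<exists>v\<in>t. u v \<noteq> 0"
    proof (rule ccontr)
      assume "\<not> ?thesis"
      then have "f = 0" unfolding t(3) by (simp add: fscale_def fun_eq_iff my_sum_apply[OF t(1)])
      with f show False by simp
    qed
    then obtain v where v: "v \<in> t" "u v \<noteq> 0" by blast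
    show "\<not> bounded (f ` I)"
    proof
      assume "bounded (f ` I)"
      then obtain M where M: "\<And>y. y \<in> f ` I \<Longrightarrow> norm y \<le> M" by (meson bounded_iff)
      obtain n :: nat where n: "M / \<bar>u v\<bar> < real n" using reals_Archimedean2 by blast
      obtain x where x: "x \<in> I" "f x = real n * u v" using key[OF t(1,2) v(1), of u n] t(3) by blast
      have "norm (f x) \<le> M" using M x(1) by blast
      moreover have "M < real n * \<bar>u v\<bar>" using n v(2) by (simp add: field_simps)
      ultimately show False using x(2) by (simp add: abs_mult)
    qed
  qed
  show ?thesis
    apply (rule exI[of _ "M.span B"], rule exI[of _ B])
    using c1 c2 c3 c4 c5 c6 by blast
qed

end
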